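(* Let $\mathbb{F}$ be a field of characteristic $2$, $V$ a finite-dimensional $\mathbb{F}$-vector space and $b$ a non-degenerate symmetric bilinear form on $V$ with attached quadratic form $Q: x\mapsto b(x,x)$. Assume that $\operatorname{Ker} Q$ is totally $b$-singular. Then $\operatorname{Ker} Q$ is stable under every nilpotent $b$-symmetric endomorphism of $V$.
   Context: $\operatorname{Ker} Q = \{x\in V : Q(x)=0\}$, a linear subspace in characteristic $2$. A subspace $X$ is totally $b$-singular if $b(x,y)=0$ for all $x,y\in X$. An endomorphism $u$ is $b$-symmetric if $(x,y)\mapsto b(x,u(y))$ is symmetric. *)

theory Defs
  imports Complex_Main
begin

definition bilinear_form :: "('f::field \<Rightarrow> 'v::ab_group_add \<Rightarrow> 'v) \<Rightarrow> ('v \<Rightarrow> 'v \<Rightarrow> 'f) \<Rightarrow> bool" where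
  "bilinear_form scale b \<longleftrightarrow>
     (\<forall>y. Vector_Spaces.linear scale (*) (\<lambda>x. b x y)) \<and>
     (\<forall>x. Vector_Spaces.linear scale (*) (\<lambda>y. b x y))"

definition symmetric_form :: "('v \<Rightarrow> 'v \<Rightarrow> 'f) \<Rightarrow> bool" where
  "symmetric_form b \<longleftrightarrow> (\<forall>x y. b x y = b y x)"

definition nondegenerate :: "('v::zero \<Rightarrow> 'v \<Rightarrow> 'f::zero) \<Rightarrow> bool" where
  "nondegenerate b \<longleftrightarrow> (\<forall>x. (\<forall>y. b x y = 0) \<longrightarrow> x = 0)"

definition quad_form :: "('v \<Rightarrow> 'v \<Rightarrow> 'f) \<Rightarrow> 'v \<Rightarrow> 'f" where
  "quad_form b x = b x x"

definition KerQ :: "('v \<Rightarrow> 'v \<Rightarrow> 'f::zero) \<Rightarrow> 'v set" where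
  "KerQ b = {x. quad_form b x = 0}"

definition totally_singular :: "('v \<Rightarrow> 'v \<Rightarrow> 'f::zero) \<Rightarrow> 'v set \<Rightarrow> bool" where
  "totally_singular b X \<longleftrightarrow> (\<forall>x\<in>X. \<forall>y\<in>X. b x y = 0)"

definition b_symmetric :: "('v \<Rightarrow> 'v \<Rightarrow> 'f) \<Rightarrow> ('v \<Rightarrow> 'v) \<Rightarrow> bool" where
  "b_symmetric b u \<longleftrightarrow> (\<forall>x y. b x (u y) = b y (u x))"

definition nilpotent_endo :: "('v::zero \<Rightarrow> 'v) \<Rightarrow> bool" where
  "nilpotent_endo u \<longleftrightarrow> (\<exists>k. (u ^^ k) = (\<lambda>_. 0))"

end

theory Submission
  imports Defs
begin

lemma adj_pow:
  assumes sym: "symmetric_form b" and bs: "b_symmetric b u"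
  shows "b ((u ^^ j) a) c = b a ((u ^^ j) c)"
proof (induction j arbitrary: a c)
  case 0 then show ?case by simp
next
  case (Suc j)
  have "b ((u ^^ Suc j) a) c = b (u ((u ^^ j) a)) c" by simp
  also have "\<dots> = b c (u ((u ^^ j) a))" using sym unfolding symmetric_form_def by metis
  also have "\<dots> = b ((u ^^ j) a) (u c)" using bs unfolding b_symmetric_def by metis
  also have "\<dots> = b a ((u ^^ j) (u c))" using Suc by metis
  also have "\<dots> = b a ((u ^^ Suc j) c)" by (simp add: funpow_swap1)
  finally show ?case .
qed

theorem lemma5p1:
  fixes scale :: "'f::field \<Rightarrow> 'v::ab_group_add \<Rightarrow> 'v"
    and b :: "'v \<Rightarrow> 'v \<Rightarrow> 'f"
  assumes char2: "CHAR('f) = 2"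
    and fdim: "\<exists>B. finite_dimensional_vector_space scale B"
    and bil: "bilinear_form scale b"
    and sym: "symmetric_form b"
    and nondeg: "nondegenerate b"
    and ts: "totally_singular b (KerQ b)"
  shows "\<forall>u. Vector_Spaces.linear scale scale u \<and> nilpotent_endo u \<and> b_symmetric b u
           \<longrightarrow> u ` KerQ b \<subseteq> KerQ b"
proof (intro allI impI subsetI)
  fix u y
  assume H: "Vector_Spaces.linear scale scale u \<and> nilpotent_endo u \<and> b_symmetric b u"
    and y: "y \<in> u ` KerQ b"
  then obtain x where x: "x \<in> KerQ b" and yx: "y = u x" by blast
  from H obtain N where N: "(u ^^ N) = (\<lambda>_. 0)" unfolding nilpotent_endo_def by blast
  have bs: "b_symmetric b u" using H by blast
  have lin0: "Vector_Spaces.linear scale (*) (\<lambda>x. b x 0)" using bil unfolding bilinear_form_def by blast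
  have b00: "b 0 0 = 0" using lin0 unfolding Vector_Spaces.linear_def by (metis module_hom.zero)
  have main: "\<forall>j. j \<ge> 1 \<longrightarrow> j + m \<ge> N \<longrightarrow> (u ^^ j) x \<in> KerQ b" for m
  proof (induction m)
    case 0
    show ?case
    proof (intro allI impI)
      fix j :: nat assume "j \<ge> 1" "j + 0 \<ge> N"
      then have "u ^^ j = (u ^^ N) \<circ> (u ^^ (j - N))"
        by (metis funpow_add le_add_diff_inverse add_0_right)
      then have "(u ^^ j) x = 0" using N by simp
      then show "(u ^^ j) x \<in> KerQ b" using b00 by (simp add: KerQ_def quad_form_def)
    qed
  next
    case (Suc m)
    show ?case
    proof (intro allI impI)
      fix j :: nat assume j1: "j \<ge> 1" and jm: "j + Suc m \<ge> N"
      have "(u ^^ (j + j)) x \<in> KerQ b" using Suc j1 jm by simp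
      then have z: "b x ((u ^^ (j + j)) x) = 0" using ts x unfolding totally_singular_def by blast
      have "b ((u ^^ j) x) ((u ^^ j) x) = b x ((u ^^ j) ((u ^^ j) x))"
        using adj_pow[OF sym bs] by blast
      also have "\<dots> = b x ((u ^^ (j + j)) x)" by (simp add: funpow_add)
      finally show "(u ^^ j) x \<in> KerQ b" using z by (simp add: KerQ_def quad_form_def)
    qed
  qed
  have "(u ^^ 1) x \<in> KerQ b" using main[of N] by (metis le_add2 le_refl)
  then show "y \<in> KerQ b" using yx by simp
qed

end
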